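(* Assume $\Delta=0$. Let $\lambda_1,\lambda_2,\lambda_3\in K$ with $\lambda_ic_i\in N$ and $s_i':=s_i\nu_i$ where $\nu_i\in N$ corresponds to $\lambda_ic_i$. Then $s_1's_2'$ has order exactly $p$, $s_1's_3'$ has order exactly $q$, and $s_2's_3'$ has order exactly $r$.
   Context: Setting. Let $p,q,r\ge 3$ be integers and $W=W(p,q,r)$ the Coxeter group with generators $s_1,s_2,s_3$ and relations $s_i^2=1$, $(s_1s_2)^p=(s_1s_3)^q=(s_2s_3)^r=1$. Let $\alpha=4\cos^2(\pi k_1/p)$, $\beta=4\cos^2(\pi k_2/q)$, $\gamma=4\cos^2(\pi k_3/r)$ with $\gcd(k_1,p)=\gcd(k_2,q)=\gcd(k_3,r)=1$ (so $0<\alpha,\beta,\gamma<4$), and let $l,m\in\mathbb{C}$ with $lm=\gamma$. Let $K\subset\mathbb{C}$ be a field containing $\alpha,\beta,\gamma,l,m$, and $M$ a $3$-dimensional $K$-vector space with basis $(a_1,a_2,a_3)$. The reflection representation $R:W\to GL(M)$ with parameters $(\alpha,\beta,\gamma;l,m)$ is defined by: for $x=\lambda_1a_1+\lambda_2a_2+\lambda_3a_3$, $R(s_1)x=x-(2\lambda_1-\alpha\lambda_2-\beta\lambda_3)a_1$, $R(s_2)x=x-(-\lambda_1+2\lambda_2-l\lambda_3)a_2$, $R(s_3)x=x-(-\lambda_1-m\lambda_2+2\lambda_3)a_3$. Put $G=R(W)$ and write $s_i$ for $R(s_i)$ (then $s_1s_2,s_1s_3,s_2s_3$ have orders exactly $p,q,r$).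 Let $\Delta=8-2\alpha-2\beta-2\gamma-(\alpha l+\beta m)$; $R$ is reducible iff $\Delta=0$. Reducible setting. Assume $\Delta=0$. Put $b=(4-\gamma)a_1+(l+2)a_2+(m+2)a_3$; then the space of $G$-fixed vectors is $C_M(G)=Kb$ and $(b,a_2,a_3)$ is a basis of $M$. Let $N=N(G)$ be the subgroup of elements of $G$ acting trivially on $M/C_M(G)$. Each $\zeta\in N$ satisfies $\zeta(b)=b$, $\zeta(a_2)=a_2+\lambda b$, $\zeta(a_3)=a_3+\mu b$ for a unique $(\lambda,\mu)\in K^2$; the map $\zeta\mapsto(\lambda,\mu)$ is an injective group homomorphism $N\to (K^2,+)$, through which $N$ is identified with an additive subgroup of $K^2$ (and written additively). Put $c_1=(\alpha,\beta)$, $c_2=(-2,l)$, $c_3=(m,-2)\in K^2$. *)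

theory Defs
  imports "HOL-Analysis.Analysis"
begin

text \<open>The module M = K^3 with basis a1 a2 a3 (we take K = the complex numbers).\<close>

definition a1 :: "complex ^ 3" where "a1 = axis 1 1"
definition a2 :: "complex ^ 3" where "a2 = axis 2 1"
definition a3 :: "complex ^ 3" where "a3 = axis 3 1"

text \<open>Images of the Coxeter generators under the reflection representation
  with parameters (alpha, beta, gamma; l, m).  Coordinates: x = x$1 a1 + x$2 a2 + x$3 a3.\<close>

definition refl1 :: "complex \<Rightarrow> complex \<Rightarrow> complex ^ 3 \<Rightarrow> complex ^ 3" where
  "refl1 \<alpha> \<beta> x = x - (2 * x$1 - \<alpha> * x$2 - \<beta> * x$3) *s a1"

definition refl2 :: "complex \<Rightarrow> complex ^ 3 \<Rightarrow> complex ^ 3" where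
  "refl2 l x = x - (- x$1 + 2 * x$2 - l * x$3) *s a2"

definition refl3 :: "complex \<Rightarrow> complex ^ 3 \<Rightarrow> complex ^ 3" where
  "refl3 m x = x - (- x$1 - m * x$2 + 2 * x$3) *s a3"

text \<open>Since the generators used below are involutions,
  this is the subgroup they generate, i.e. G = R(W).\<close>

inductive_set gen_monoid :: "('a \<Rightarrow> 'a) set \<Rightarrow> ('a \<Rightarrow> 'a) set" for S where
  gen_id: "id \<in> gen_monoid S"
| gen_step: "s \<in> S \<Longrightarrow> g \<in> gen_monoid S \<Longrightarrow> s \<circ> g \<in> gen_monoid S"

definition reflG :: "complex \<Rightarrow> complex \<Rightarrow> complex \<Rightarrow> complex \<Rightarrow> (complex^3 \<Rightarrow> complex^3) set" where
  "reflG \<alpha> \<beta> l m = gen_monoid {refl1 \<alpha> \<beta>, refl2 l, refl3 m}"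

definition fixed_space :: "('a \<Rightarrow> 'a) set \<Rightarrow> 'a set" where
  "fixed_space G = {v. \<forall>g\<in>G. g v = v}"

text \<open>N(G): elements of G acting trivially on M / C_M(G).\<close>
definition Nsub :: "(('a::ab_group_add) \<Rightarrow> 'a) set \<Rightarrow> ('a \<Rightarrow> 'a) set" where
  "Nsub G = {z \<in> G. \<forall>x. z x - x \<in> fixed_space G}"

definition has_order :: "('a \<Rightarrow> 'a) \<Rightarrow> nat \<Rightarrow> bool" where
  "has_order f n \<longleftrightarrow> 0 < n \<and> (f ^^ n) = id \<and> (\<forall>k. 0 < k \<and> k < n \<longrightarrow> (f ^^ k) \<noteq> id)"

end

theory Submission
  imports Defs
begin

lemma omega_pow:
  fixes n k j :: nat
  assumes "n > 0" "coprime k n"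
  shows "exp (complex_of_real (2*pi*real k/real n) * \<i>) ^ j = 1 \<longleftrightarrow> n dvd j"
proof -
  have "exp (complex_of_real (2*pi*real k/real n) * \<i>) ^ j
      = exp (of_nat j * (complex_of_real (2*pi*real k/real n) * \<i>))"
    by (simp only: exp_of_nat_mult)
  also have "\<dots> = 1 \<longleftrightarrow> (\<exists>N::int. real j * (2*pi*real k/real n) = of_int (2*N) * pi)"
    by (simp add: exp_eq_1)
  also have "\<dots> \<longleftrightarrow> (\<exists>N::int. real (j*k) = real n * of_int N)"
  proof -
    have "real j * (2*pi*real k/real n) = of_int (2*N) * pi \<longleftrightarrow> real (j*k) = real n * of_int N" for N
      using assms(1) pi_gt_zero by (simp add: field_simps)
    then show ?thesis by simp
  qed
  also have "\<dots> \<longleftrightarrow> int n dvd int (j*k)"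
  proof
    assume "\<exists>N::int. real (j*k) = real n * of_int N"
    then obtain N::int where "real (j*k) = real n * of_int N" by blast
    then have "of_int (int (j*k)) = (of_int (int n * N) :: real)" by simp
    then have "int (j*k) = int n * N" by (metis of_int_eq_iff)
    then show "int n dvd int (j*k)" by simp
  next
    assume "int n dvd int (j*k)"
    then obtain N where "int (j*k) = int n * N" by (auto simp: dvd_def)
    then have "real_of_int (int (j*k)) = real_of_int (int n * N)" by simp
    then show "\<exists>N::int. real (j*k) = real n * of_int N" by (intro exI[of _ N]) simp
  qed
  also have "\<dots> \<longleftrightarrow> n dvd j*k" by (simp only: int_dvd_int_iff)
  also have "\<dots> \<longleftrightarrow> n dvd j" using assms(2)
    by (metis coprime_commute coprime_dvd_mult_left_iff)
  finally show ?thesis .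
qed


lemma c_omega:
  fixes n k :: nat
  assumes "n > 0"
  shows "complex_of_real (4 * (cos (pi * real k / real n))^2)
     = 2 + exp (complex_of_real (2*pi*real k/real n) * \<i>) + inverse (exp (complex_of_real (2*pi*real k/real n) * \<i>))"
proof -
  define \<theta> where "\<theta> = pi * real k / real n"
  have "4 * (cos \<theta>)^2 = 2 + 2 * cos (2*\<theta>)" by (simp add: cos_double_cos)
  then have "complex_of_real (4 * (cos \<theta>)^2) = 2 + 2 * cos (complex_of_real (2*\<theta>))"
    by (simp flip: cos_of_real)
  also have "\<dots> = 2 + exp (complex_of_real (2*\<theta>) * \<i>) + inverse (exp (complex_of_real (2*\<theta>) * \<i>))"
    by (simp add: cos_exp_eq exp_minus mult.commute)
  finally show ?thesis by (simp add: \<theta>_def mult.assoc)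
qed


lemma two_refl_order:
  fixes F H :: "complex^3 \<Rightarrow> complex" and u v :: "complex^3" and x y c :: complex and n k :: nat
  assumes n3: "n \<ge> 3" and cop: "coprime k n"
    and cdef: "c = complex_of_real (4 * (cos (pi * real k / real n))^2)"
    and Fd: "\<And>z. F z = f1 * z$1 + f2 * z$2 + f3 * z$3"
    and Hd: "\<And>z. H z = h1 * z$1 + h2 * z$2 + h3 * z$3"
    and Fu: "F u = 2" and Hv: "H v = 2" and Fv: "F v = -x" and Hu: "H u = -y" and xy: "x*y = c"
  shows "has_order ((\<lambda>z. z - F z *s u) \<circ> (\<lambda>z. z - H z *s v)) n"
proof -
  define \<omega> where "\<omega> = exp (complex_of_real (2*pi*real k/real n) * \<i>)"
  have n0: "n > 0" using n3 by simp
  have pw: "\<omega> ^ j = 1 \<longleftrightarrow> n dvd j" for j unfolding \<omega>_def using omega_pow[OF n0 cop] .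
  have w0: "\<omega> \<noteq> 0" by (simp add: \<omega>_def)
  have w2: "\<omega>^2 \<noteq> 1" using pw[of 2] n3 by (auto dest: dvd_imp_le)
  have wn: "\<omega>^n = 1" using pw by simp
  have cw: "c = 2 + \<omega> + inverse \<omega>" using c_omega[OF n0, of k] cdef \<omega>_def by simp
  define d where "d = \<omega> - inverse \<omega>"
  have d0: "d \<noteq> 0"
  proof
    assume "d = 0"
    then have "\<omega> * \<omega> = \<omega> * inverse \<omega>" by (simp add: d_def)
    then show False using w0 w2 by (simp add: power2_eq_square)
  qed
  have c4: "4 - c \<noteq> 0"
  proof
    assume "4 - c = 0"
    then have "\<omega> * (4 - c) = 0" by simp
    moreover have "(\<omega> - 1)^2 = - (\<omega> * (4 - c))" using w0 unfolding cw by (simp add: field_simps power2_eq_square)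
    ultimately have "(\<omega> - 1)^2 = 0" by simp
    then have "\<omega> = 1" by simp
    then show False using w2 by simp
  qed
  have c0: "c \<noteq> 0"
  proof
    assume "c = 0"
    then have "\<omega> * c = 0" by simp
    moreover have "(\<omega> + 1)^2 = \<omega> * c" using w0 unfolding cw by (simp add: field_simps power2_eq_square)
    ultimately have "(\<omega> + 1)^2 = 0" by simp
    then have "\<omega> = -1" by (simp add: add_eq_0_iff) (metis minus_equation_iff)
    then show False using w2 by simp
  qed
  have y0: "y \<noteq> 0" using xy c0 by auto
  define s where "s = (\<lambda>z. z - F z *s u)"
  define s' where "s' = (\<lambda>z. z - H z *s v)"
  define f where "f = s \<circ> s'"
  have Fadd: "F (a + b) = F a + F b" "F (a - b) = F a - F b" "F (t *s a) = t * F a" for a b t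
    by (simp_all add: Fd algebra_simps)
  have Hadd: "H (a + b) = H a + H b" "H (a - b) = H a - H b" "H (t *s a) = t * H a" for a b t
    by (simp_all add: Hd algebra_simps)
  have fadd: "f (a + b) = f a + f b" "f (a - b) = f a - f b" "f (t *s a) = t *s f a" for a b t
    by (simp_all add: f_def s_def s'_def Fadd Hadd vec_eq_iff algebra_simps)
  have fw: "f (U *s u + V *s v) = (U*(c-1) - V*x) *s u + (U*y - V) *s v" for U V
  proof -
    have "f (U *s u + V *s v) = s (U *s u + V *s v - (U * (-y) + V * 2) *s v)"
      by (simp add: f_def s'_def Hadd Hu Hv)
    also have "\<dots> = s (U *s u + (U*y - V) *s v)"
      by (rule arg_cong[where f=s]) (simp add: vec_eq_iff algebra_simps)
    also have "\<dots> = U *s u + (U*y - V) *s v - (U*2 + (U*y - V)*(-x)) *s u"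
      by (simp add: s_def Fadd Fu Fv vec_eq_iff algebra_simps)
    also have "\<dots> = (U*(c-1) - V*x) *s u + (U*y - V) *s v"
      using xy by (simp add: vec_eq_iff algebra_simps)
    finally show ?thesis .
  qed
  have ch: "f (f w) = (c - 2) *s f w - w" if "w = U *s u + V *s v" for w U V
  proof -
    have "f (f w) = ((U*(c-1) - V*x)*(c-1) - (U*y - V)*x) *s u + ((U*(c-1) - V*x)*y - (U*y - V)) *s v"
      by (simp only: that fw)
    also have "(U*(c-1) - V*x)*(c-1) - (U*y - V)*x = (c-2)*(U*(c-1) - V*x) - U"
      using xy[symmetric] by (simp add: algebra_simps)
    also have "(U*(c-1) - V*x)*y - (U*y - V) = (c-2)*(U*y - V) - V"
      using xy[symmetric] by (simp add: algebra_simps)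
    also have "((c-2)*(U*(c-1) - V*x) - U) *s u + ((c-2)*(U*y - V) - V) *s v
        = (c - 2) *s ((U*(c-1) - V*x) *s u + (U*y - V) *s v) - (U *s u + V *s v)"
      by (simp add: vec_eq_iff algebra_simps)
    finally show ?thesis by (simp only: that fw)
  qed
  define P where "P m = (\<omega>^m - inverse \<omega> ^ m) / d" for m :: nat
  define P' where "P' m = (\<omega>^m * inverse \<omega> - inverse \<omega> ^ m * \<omega>) / d" for m :: nat
  have Prec: "P (Suc m) = P m * (c - 2) - P' m" for m
  proof -
    have aux: "(a - b)/d * (w + q) - (a*q - b*w)/d = (w*a - q*b)/d" for a b w q :: complex
      using d0 by (simp add: field_simps)
    have "c - 2 = \<omega> + inverse \<omega>" using cw by simp
    then show ?thesis unfolding P_def P'_def using aux[of "\<omega>^m" "inverse \<omega> ^ m" \<omega> "inverse \<omega>"]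
      by simp
  qed
  have P'rec: "P' (Suc m) = P m" for m
    using w0 d0 unfolding P_def P'_def by (simp add: field_simps)
  have iter: "(f ^^ m) w = P m *s f w - P' m *s w" if "w = U *s u + V *s v" for w U V m
  proof (induction m)
    case 0
    have "P' 0 = -1" using w0 d0 unfolding P'_def d_def by (simp add: field_simps)
    then show ?case by (simp add: P_def)
  next
    case (Suc m)
    have "(f ^^ Suc m) w = f (P m *s f w - P' m *s w)" using Suc by simp
    also have "\<dots> = P m *s f (f w) - P' m *s f w" by (simp add: fadd)
    also have "\<dots> = P m *s ((c - 2) *s f w - w) - P' m *s f w" using ch[OF that] by simp
    also have "\<dots> = (P m * (c - 2) - P' m) *s f w - P m *s w" by (simp add: vec_eq_iff algebra_simps)
    finally show ?case by (simp add: Prec P'rec)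
  qed
  have fix0: "(f ^^ m) z = z" if "F z = 0" "H z = 0" for z m
  proof (induction m)
    case 0 then show ?case by simp
  next
    case (Suc m) then show ?case using that by (simp add: f_def s_def s'_def)
  qed
  have fpadd: "(f ^^ m) (a + b) = (f ^^ m) a + (f ^^ m) b" for a b m
    by (induction m) (simp_all add: fadd)
  have "(f ^^ n) = id"
  proof
    fix z
    define U where "U = (2 * F z + x * H z)/(4-c)"
    define V where "V = (y * F z + 2 * H z)/(4-c)"
    define w where "w = U *s u + V *s v"
    have "F w = U*2 - V*x" unfolding w_def by (simp add: Fadd Fu Fv)
    also have "\<dots> = ((4 - x*y) * F z)/(4-c)" unfolding U_def V_def
      by (simp add: diff_divide_distrib[symmetric] times_divide_eq_left algebra_simps)
    also have "\<dots> = F z" using c4 xy by simp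
    finally have "F w = F z" .
    moreover have "H w = H z"
    proof -
      have "H w = 2*V - U*y" unfolding w_def by (simp add: Hadd Hu Hv)
      also have "\<dots> = ((4 - x*y) * H z)/(4-c)" unfolding U_def V_def
        by (simp add: diff_divide_distrib[symmetric] times_divide_eq_left algebra_simps)
      also have "\<dots> = H z" using c4 xy by simp
      finally show ?thesis .
    qed
    ultimately have "(f ^^ n) (z - w) = z - w" by (intro fix0) (simp_all add: Fadd Hadd)
    moreover have "(f ^^ n) w = w"
    proof -
      have "P n = 0" "P' n = -1" using wn w0 d0 unfolding P_def P'_def d_def
        by (simp_all add: power_inverse field_simps)
      then show ?thesis using iter[OF w_def, of n] by simp
    qed
    ultimately have "(f ^^ n) (z - w + w) = z" using fpadd[of n "z - w" w] by simp
    then show "(f ^^ n) z = id z" by simp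
  qed
  moreover have "(f ^^ j) \<noteq> id" if j: "0 < j" "j < n" for j
  proof
    assume fj: "(f ^^ j) = id"
    have "(f ^^ j) u = P j *s f u - P' j *s u" using iter[of u 1 0 j] by simp
    then have eq: "P j *s f u - P' j *s u = u" using fj by simp
    have fu: "f u = (c-1) *s u + y *s v" using fw[of 1 0] by simp
    have e1: "P j * (c - 2) - P' j * 2 = 2"
    proof -
      have "F (P j *s f u - P' j *s u) = F u" using eq by simp
      moreover have "x*(y*t) = c*t" for t using xy by (simp add: mult.assoc[symmetric])
      ultimately show ?thesis by (simp add: Fadd fu Fu Fv algebra_simps)
    qed
    have e2: "P j * (y*(3 - c)) + P' j * y = -y"
    proof -
      have "H (P j *s f u - P' j *s u) = H u" using eq by simp
      then show ?thesis by (simp add: Hadd fu Hu Hv algebra_simps)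
    qed
    have e2': "P j * (3 - c) + P' j = -1"
    proof -
      have "y * (P j * (3 - c) + P' j) = y * (-1)" using e2 by (simp add: algebra_simps)
      then show ?thesis using y0 by (metis mult_cancel_left)
    qed
    have "P j * (4 - c) = 0" using e1 e2' by (simp add: algebra_simps)
    then have Pj: "P j = 0" using c4 by simp
    then have P'j: "P' j = -1" using e2' by simp
    have a: "\<omega>^j = inverse \<omega> ^ j" using Pj d0 by (simp add: P_def)
    have "\<omega>^j * inverse \<omega> - inverse \<omega> ^ j * \<omega> = - d" using P'j d0 by (simp add: P'_def field_simps)
    then have "\<omega>^j * (inverse \<omega> - \<omega>) = 1 * (inverse \<omega> - \<omega>)" using a by (simp add: d_def algebra_simps)
    moreover have "inverse \<omega> - \<omega> \<noteq> 0" using d0 by (simp add: d_def)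
    ultimately have "\<omega>^j = 1" by (metis mult_cancel_right)
    then have "n dvd j" using pw by simp
    then show False using j by (auto dest: dvd_imp_le)
  qed
  ultimately show ?thesis unfolding has_order_def f_def s_def s'_def using n0 by blast
qed


lemma c_ne4:
  fixes n k :: nat
  assumes n3: "n \<ge> 3" and cop: "coprime k n"
  shows "complex_of_real (4 * (cos (pi * real k / real n))^2) \<noteq> 4"
proof
  define \<omega> where "\<omega> = exp (complex_of_real (2*pi*real k/real n) * \<i>)"
  define c where "c = complex_of_real (4 * (cos (pi * real k / real n))^2)"
  assume "complex_of_real (4 * (cos (pi * real k / real n))^2) = 4"
  then have "4 - c = 0" by (simp add: c_def)
  have n0: "n > 0" using n3 by simp
  have pw: "\<omega> ^ j = 1 \<longleftrightarrow> n dvd j" for j unfolding \<omega>_def using omega_pow[OF n0 cop] .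
  have w0: "\<omega> \<noteq> 0" by (simp add: \<omega>_def)
  have w2: "\<omega>^2 \<noteq> 1" using pw[of 2] n3 by (auto dest: dvd_imp_le)
  have cw: "c = 2 + \<omega> + inverse \<omega>" using c_omega[OF n0, of k] c_def \<omega>_def by simp
  have "\<omega> * (4 - c) = 0" using \<open>4 - c = 0\<close> by simp
  moreover have "(\<omega> - 1)^2 = - (\<omega> * (4 - c))" using w0 unfolding cw by (simp add: field_simps power2_eq_square)
  ultimately have "(\<omega> - 1)^2 = 0" by simp
  then have "\<omega> = 1" by simp
  then show False using w2 by simp
qed

lemma vec3_expand: "(z::complex^3) = z$1 *s a1 + z$2 *s a2 + z$3 *s a3"
  by (simp add: vec_eq_iff forall_3 a1_def a2_def a3_def axis_def)

lemma regroup3: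
  fixes A1 A2 A3 B :: "complex^3"
  shows "z1 *s (A1 - k *s B) + z2 *s (A2 + m2 *s B) + z3 *s (A3 + m3 *s B)
       = (z1 *s A1 + z2 *s A2 + z3 *s A3) + (z2*m2 + z3*m3 - z1*k) *s B"
  by (simp add: vec_eq_iff algebra_simps)

lemma nu_form:
  fixes g :: "complex^3 \<Rightarrow> complex^3"
  assumes gadd: "\<And>x y. g (x + y) = g x + g y" and gsm: "\<And>t x. g (t *s x) = t *s g x"
    and gb: "g b = b" and bd: "b = B1 *s a1 + B2 *s a2 + B3 *s a3" and B1: "B1 \<noteq> 0"
    and g2: "g a2 = a2 + \<mu>2 *s b" and g3: "g a3 = a3 + \<mu>3 *s b"
  shows "g z = z + (z$2*\<mu>2 + z$3*\<mu>3 - z$1*((B2*\<mu>2 + B3*\<mu>3)/B1)) *s b"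
proof -
  have "b = g b" using gb by simp
  also have "\<dots> = B1 *s g a1 + B2 *s g a2 + B3 *s g a3" by (subst bd) (simp add: gadd gsm)
  finally have "B1 *s g a1 = b - B2 *s g a2 - B3 *s g a3" by (simp add: algebra_simps)
  then have "(1/B1) *s (B1 *s g a1) = (1/B1) *s (b - B2 *s g a2 - B3 *s g a3)" by simp
  then have g1: "g a1 = (1/B1) *s (b - B2 *s (a2 + \<mu>2 *s b) - B3 *s (a3 + \<mu>3 *s b))"
    using B1 by (simp add: g2 g3)
  have a1e: "a1 = (1/B1) *s (b - B2 *s a2 - B3 *s a3)"
    using B1 bd by (simp add: vec_eq_iff field_simps)
  have g1': "g a1 = a1 - ((B2*\<mu>2 + B3*\<mu>3)/B1) *s b"
    unfolding g1 using B1 by (subst a1e) (simp add: vec_eq_iff field_simps)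
  have "g z = z$1 *s g a1 + z$2 *s g a2 + z$3 *s g a3"
  proof -
    have "g z = g (z$1 *s a1 + z$2 *s a2 + z$3 *s a3)" by (rule arg_cong[where f=g, OF vec3_expand])
    then show ?thesis by (simp add: gadd gsm)
  qed
  also have "\<dots> = z$1 *s (a1 - ((B2*\<mu>2 + B3*\<mu>3)/B1) *s b) + z$2 *s (a2 + \<mu>2 *s b) + z$3 *s (a3 + \<mu>3 *s b)"
    unfolding g1' g2 g3 ..
  also have "\<dots> = (z$1 *s a1 + z$2 *s a2 + z$3 *s a3) + (z$2*\<mu>2 + z$3*\<mu>3 - z$1*((B2*\<mu>2 + B3*\<mu>3)/B1)) *s b"
    by (rule regroup3)
  also have "\<dots> = z + (z$2*\<mu>2 + z$3*\<mu>3 - z$1*((B2*\<mu>2 + B3*\<mu>3)/B1)) *s b"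
    by (simp only: vec3_expand[of z, symmetric])
  finally show ?thesis .
qed


lemma G_props:
  fixes b :: "complex^3"
  assumes "g \<in> gen_monoid {refl1 \<alpha> \<beta>, refl2 l, refl3 m}"
    and "2*b$1 - \<alpha>*b$2 - \<beta>*b$3 = 0" "- b$1 + 2*b$2 - l*b$3 = 0" "- b$1 - m*b$2 + 2*b$3 = 0"
  shows "(\<forall>x y. g (x + y) = g x + g y) \<and> (\<forall>t x. g (t *s x) = t *s g x) \<and> g b = b"
  using assms(1)
proof (induction rule: gen_monoid.induct)
  case gen_id then show ?case by simp
next
  case (gen_step s g)
  have "(\<forall>x y. s (x + y) = s x + s y) \<and> (\<forall>t x. s (t *s x) = t *s s x)"
    using gen_step(1) by (auto simp: refl1_def refl2_def refl3_def vec_eq_iff algebra_simps)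
  moreover have "s b = b" using gen_step(1) assms(2-4) by (auto simp: refl1_def refl2_def refl3_def)
  ultimately show ?case using gen_step(3) by simp
qed

lemma refl_nu:
  fixes R g :: "complex^3 \<Rightarrow> complex^3" and F :: "complex^3 \<Rightarrow> complex" and a b :: "complex^3"
  assumes R: "\<And>z. R z = z - F z *s a" and Fl: "\<And>x t. F (x + t *s b) = F x"
    and gz: "\<And>z. g z = z + (- lam * F z) *s b"
  shows "R \<circ> g = (\<lambda>z. z - F z *s (a + lam *s b))"
proof
  fix z
  have "(R \<circ> g) z = (z + (- lam * F z) *s b) - F z *s a" by (simp only: o_apply R gz Fl)
  also have "\<dots> = z - F z *s (a + lam *s b)" by (simp add: vec_eq_iff algebra_simps)
  finally show "(R \<circ> g) z = z - F z *s (a + lam *s b)" .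
qed

lemma e1_lem:
  fixes \<alpha> \<beta> \<gamma> l m lam :: complex
  assumes D: "8 - 2*\<alpha> - 2*\<beta> - 2*\<gamma> - (\<alpha> * l + \<beta> * m) = 0" and g4: "4 - \<gamma> \<noteq> 0"
  shows "((l+2)*(lam*\<alpha>) + (m+2)*(lam*\<beta>))/(4-\<gamma>) = 2*lam"
proof -
  have h: "\<alpha>*l + \<beta>*m = 8 - 2*\<alpha> - 2*\<beta> - 2*\<gamma>" using D by (simp add: algebra_simps)
  have "(l+2)*(lam*\<alpha>) + (m+2)*(lam*\<beta>) = lam*((\<alpha>*l + \<beta>*m) + 2*\<alpha> + 2*\<beta>)"
    by (simp add: algebra_simps)
  also have "\<dots> = lam*((8 - 2*\<alpha> - 2*\<beta> - 2*\<gamma>) + 2*\<alpha> + 2*\<beta>)" by (simp only: h)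
  also have "\<dots> = 2*lam*(4-\<gamma>)" by (simp add: algebra_simps)
  finally show ?thesis using g4 by simp
qed

lemma e2_lem:
  fixes \<gamma> l m lam :: complex
  assumes lm: "l * m = \<gamma>" and g4: "4 - \<gamma> \<noteq> 0"
  shows "((l+2)*(lam*(-2)) + (m+2)*(lam*l))/(4-\<gamma>) = - lam"
proof -
  have "(l+2)*(lam*(-2)) + (m+2)*(lam*l) = lam*(l*m - 4)" by (simp add: algebra_simps)
  also have "\<dots> = - lam*(4 - \<gamma>)" using lm by (simp add: algebra_simps)
  finally show ?thesis using g4 by simp
qed

lemma e3_lem:
  fixes \<gamma> l m lam :: complex
  assumes lm: "l * m = \<gamma>" and g4: "4 - \<gamma> \<noteq> 0"
  shows "((l+2)*(lam*m) + (m+2)*(lam*(-2)))/(4-\<gamma>) = - lam"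
proof -
  have "(l+2)*(lam*m) + (m+2)*(lam*(-2)) = lam*(l*m - 4)" by (simp add: algebra_simps)
  also have "\<dots> = - lam*(4 - \<gamma>)" using lm by (simp add: algebra_simps)
  finally show ?thesis using g4 by simp
qed

theorem corollary1:
  fixes p q r k1 k2 k3 :: nat
    and \<alpha> \<beta> \<gamma> l m :: complex
    and lam1 lam2 lam3 :: complex
    and \<nu>1 \<nu>2 \<nu>3 :: "complex^3 \<Rightarrow> complex^3"
    and b :: "complex^3" and G :: "(complex^3 \<Rightarrow> complex^3) set"
  assumes "p \<ge> 3" "q \<ge> 3" "r \<ge> 3"
    and "coprime k1 p" "coprime k2 q" "coprime k3 r"
    and "\<alpha> = complex_of_real (4 * (cos (pi * real k1 / real p))^2)"
    and "\<beta> = complex_of_real (4 * (cos (pi * real k2 / real q))^2)"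
    and "\<gamma> = complex_of_real (4 * (cos (pi * real k3 / real r))^2)"
    and "l * m = \<gamma>"
    and Delta0: "8 - 2*\<alpha> - 2*\<beta> - 2*\<gamma> - (\<alpha> * l + \<beta> * m) = 0"
    and "b = (4 - \<gamma>) *s a1 + (l + 2) *s a2 + (m + 2) *s a3"
    and "G = reflG \<alpha> \<beta> l m"
    and nu1: "\<nu>1 \<in> Nsub G" "\<nu>1 a2 = a2 + (lam1 * \<alpha>) *s b" "\<nu>1 a3 = a3 + (lam1 * \<beta>) *s b"
    and nu2: "\<nu>2 \<in> Nsub G" "\<nu>2 a2 = a2 + (lam2 * (-2)) *s b" "\<nu>2 a3 = a3 + (lam2 * l) *s b"
    and nu3: "\<nu>3 \<in> Nsub G" "\<nu>3 a2 = a2 + (lam3 * m) *s b" "\<nu>3 a3 = a3 + (lam3 * (-2)) *s b"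
  shows "has_order ((refl1 \<alpha> \<beta> \<circ> \<nu>1) \<circ> (refl2 l \<circ> \<nu>2)) p \<and>
         has_order ((refl1 \<alpha> \<beta> \<circ> \<nu>1) \<circ> (refl3 m \<circ> \<nu>3)) q \<and>
         has_order ((refl2 l \<circ> \<nu>2) \<circ> (refl3 m \<circ> \<nu>3)) r"
proof -
  note A = assms
  define F1 where "F1 z = 2 * z$1 + (-\<alpha>) * z$2 + (-\<beta>) * z$3" for z :: "complex^3"
  define F2 where "F2 z = (-1) * z$1 + 2 * z$2 + (-l) * z$3" for z :: "complex^3"
  define F3 where "F3 z = (-1) * z$1 + (-m) * z$2 + 2 * z$3" for z :: "complex^3"
  have r1: "refl1 \<alpha> \<beta> z = z - F1 z *s a1" for z by (simp add: refl1_def F1_def)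
  have r2: "refl2 l z = z - F2 z *s a2" for z by (simp add: refl2_def F2_def)
  have r3: "refl3 m z = z - F3 z *s a3" for z by (simp add: refl3_def F3_def)
  have bc: "b$1 = 4 - \<gamma>" "b$2 = l + 2" "b$3 = m + 2"
    using A(12) by (simp_all add: a1_def a2_def a3_def axis_def)
  have F1b: "F1 b = 0" using Delta0 by (simp add: F1_def bc algebra_simps)
  have F2b: "F2 b = 0" using A(10) by (simp add: F2_def bc algebra_simps)
  have F3b: "F3 b = 0" using A(10) by (simp add: F3_def bc algebra_simps)
  have Flin: "F1 (x + t *s b) = F1 x" "F2 (x + t *s b) = F2 x" "F3 (x + t *s b) = F3 x" for x t
    using F1b F2b F3b by (simp_all add: F1_def F2_def F3_def algebra_simps)
  have bF: "2*b$1 - \<alpha>*b$2 - \<beta>*b$3 = 0" "- b$1 + 2*b$2 - l*b$3 = 0" "- b$1 - m*b$2 + 2*b$3 = 0"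
    using F1b F2b F3b by (simp_all add: F1_def F2_def F3_def)
  have nuG: "\<nu>1 \<in> gen_monoid {refl1 \<alpha> \<beta>, refl2 l, refl3 m}"
     "\<nu>2 \<in> gen_monoid {refl1 \<alpha> \<beta>, refl2 l, refl3 m}" "\<nu>3 \<in> gen_monoid {refl1 \<alpha> \<beta>, refl2 l, refl3 m}"
    using nu1(1) nu2(1) nu3(1) A(13) by (simp_all add: Nsub_def reflG_def)
  have P1: "(\<forall>x y. \<nu>1 (x + y) = \<nu>1 x + \<nu>1 y) \<and> (\<forall>t x. \<nu>1 (t *s x) = t *s \<nu>1 x) \<and> \<nu>1 b = b"
    by (rule G_props[OF nuG(1) bF])
  have P2: "(\<forall>x y. \<nu>2 (x + y) = \<nu>2 x + \<nu>2 y) \<and> (\<forall>t x. \<nu>2 (t *s x) = t *s \<nu>2 x) \<and> \<nu>2 b = b"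
    by (rule G_props[OF nuG(2) bF])
  have P3: "(\<forall>x y. \<nu>3 (x + y) = \<nu>3 x + \<nu>3 y) \<and> (\<forall>t x. \<nu>3 (t *s x) = t *s \<nu>3 x) \<and> \<nu>3 b = b"
    by (rule G_props[OF nuG(3) bF])
  have g4: "4 - \<gamma> \<noteq> 0" using c_ne4[OF A(3) A(6)] A(9) by simp
  have bd: "b = (4 - \<gamma>) *s a1 + (l + 2) *s a2 + (m + 2) *s a3" using A(12) .
  have e1: "((l+2)*(lam1*\<alpha>) + (m+2)*(lam1*\<beta>))/(4-\<gamma>) = 2*lam1" by (rule e1_lem[OF Delta0 g4])
  have e2: "((l+2)*(lam2*(-2)) + (m+2)*(lam2*l))/(4-\<gamma>) = - lam2" by (rule e2_lem[OF A(10) g4])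
  have e3: "((l+2)*(lam3*m) + (m+2)*(lam3*(-2)))/(4-\<gamma>) = - lam3" by (rule e3_lem[OF A(10) g4])
  have nf1: "\<nu>1 z = z + (z$2*(lam1*\<alpha>) + z$3*(lam1*\<beta>) - z$1*(((l+2)*(lam1*\<alpha>) + (m+2)*(lam1*\<beta>))/(4-\<gamma>))) *s b" for z
    using P1 bd g4 nu1 by (intro nu_form) auto
  have nf2: "\<nu>2 z = z + (z$2*(lam2*(-2)) + z$3*(lam2*l) - z$1*(((l+2)*(lam2*(-2)) + (m+2)*(lam2*l))/(4-\<gamma>))) *s b" for z
    using P2 bd g4 nu2 by (intro nu_form) auto
  have nf3: "\<nu>3 z = z + (z$2*(lam3*m) + z$3*(lam3*(-2)) - z$1*(((l+2)*(lam3*m) + (m+2)*(lam3*(-2)))/(4-\<gamma>))) *s b" for z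
    using P3 bd g4 nu3 by (intro nu_form) auto
  have co1: "z$2*(lam1*\<alpha>) + z$3*(lam1*\<beta>) - z$1*(((l+2)*(lam1*\<alpha>) + (m+2)*(lam1*\<beta>))/(4-\<gamma>)) = - lam1 * F1 z" for z
    unfolding e1 by (simp add: F1_def algebra_simps)
  have co2: "z$2*(lam2*(-2)) + z$3*(lam2*l) - z$1*(((l+2)*(lam2*(-2)) + (m+2)*(lam2*l))/(4-\<gamma>)) = - lam2 * F2 z" for z
    unfolding e2 by (simp add: F2_def algebra_simps)
  have co3: "z$2*(lam3*m) + z$3*(lam3*(-2)) - z$1*(((l+2)*(lam3*m) + (m+2)*(lam3*(-2)))/(4-\<gamma>)) = - lam3 * F3 z" for z
    unfolding e3 by (simp add: F3_def algebra_simps)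
  have nz1: "\<nu>1 z = z + (- lam1 * F1 z) *s b" for z using nf1[of z] by (simp only: co1)
  have nz2: "\<nu>2 z = z + (- lam2 * F2 z) *s b" for z using nf2[of z] by (simp only: co2)
  have nz3: "\<nu>3 z = z + (- lam3 * F3 z) *s b" for z using nf3[of z] by (simp only: co3)
  define u1 where "u1 = a1 + lam1 *s b"
  define u2 where "u2 = a2 + lam2 *s b"
  define u3 where "u3 = a3 + lam3 *s b"
  have s1: "refl1 \<alpha> \<beta> \<circ> \<nu>1 = (\<lambda>z. z - F1 z *s u1)"
    unfolding u1_def by (rule refl_nu[OF r1 Flin(1) nz1])
  have s2: "refl2 l \<circ> \<nu>2 = (\<lambda>z. z - F2 z *s u2)"
    unfolding u2_def by (rule refl_nu[OF r2 Flin(2) nz2])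
  have s3: "refl3 m \<circ> \<nu>3 = (\<lambda>z. z - F3 z *s u3)"
    unfolding u3_def by (rule refl_nu[OF r3 Flin(3) nz3])
  have cv: "F1 u1 = 2" "F2 u2 = 2" "F3 u3 = 2" "F1 u2 = -\<alpha>" "F1 u3 = -\<beta>" "F2 u1 = -1"
     "F3 u1 = -1" "F2 u3 = -l" "F3 u2 = -m"
    by (simp_all add: u1_def u2_def u3_def Flin) (simp_all add: F1_def F2_def F3_def a1_def a2_def a3_def axis_def)
  have o1: "has_order ((\<lambda>z. z - F1 z *s u1) \<circ> (\<lambda>z. z - F2 z *s u2)) p"
    by (rule two_refl_order[OF A(1) A(4) A(7) F1_def F2_def, where x=\<alpha> and y=1]) (simp_all add: cv)
  have o2: "has_order ((\<lambda>z. z - F1 z *s u1) \<circ> (\<lambda>z. z - F3 z *s u3)) q"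
    by (rule two_refl_order[OF A(2) A(5) A(8) F1_def F3_def, where x=\<beta> and y=1]) (simp_all add: cv)
  have o3: "has_order ((\<lambda>z. z - F2 z *s u2) \<circ> (\<lambda>z. z - F3 z *s u3)) r"
    by (rule two_refl_order[OF A(3) A(6) A(9) F2_def F3_def, where x=l and y=m]) (simp_all add: cv A(10))
  show ?thesis using o1 o2 o3 by (simp only: s1 s2 s3)
qed

thm_deps corollary1

end
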